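(* For every integer $s\geq 3$, the graph $\operatorname{KG}(2s+2,2)_{s-\operatorname{stab}}$ is a core.
   Context: For integers $s,k\geq 2$ and $n\geq ks$, a subset $S\subseteq[n]=\{1,\dots,n\}$ is $s$-stable if $s\leq |i-j|\leq n-s$ for all distinct $i,j\in S$. The $s$-stable Kneser graph $\operatorname{KG}(n,k)_{s-\operatorname{stab}}$ has as vertices the $s$-stable $k$-subsets of $[n]$, two vertices being adjacent iff they are disjoint. A finite graph $G$ is a core if every homomorphism (edge-preserving map) $G\to G$ is an automorphism of $G$, equivalently $G$ has no proper retract. *)

theory Defs
  imports Main
begin

definition ndist :: "nat \<Rightarrow> nat \<Rightarrow> nat" where
  "ndist i j = (if i \<le> j then j - i else i - j)"

definition s_stable :: "nat \<Rightarrow> nat \<Rightarrow> nat set \<Rightarrow> bool" where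
  "s_stable n s S \<longleftrightarrow> S \<subseteq> {1..n} \<and>
     (\<forall>i\<in>S. \<forall>j\<in>S. i \<noteq> j \<longrightarrow> s \<le> ndist i j \<and> ndist i j \<le> n - s)"

definition stable_kneser_vertices :: "nat \<Rightarrow> nat \<Rightarrow> nat \<Rightarrow> nat set set" where
  "stable_kneser_vertices n k s = {S. s_stable n s S \<and> card S = k}"

definition kneser_adj :: "nat set \<Rightarrow> nat set \<Rightarrow> bool" where
  "kneser_adj A B \<longleftrightarrow> A \<inter> B = {}"

definition graph_hom :: "'a set \<Rightarrow> ('a \<Rightarrow> 'a \<Rightarrow> bool) \<Rightarrow> 'b set \<Rightarrow> ('b \<Rightarrow> 'b \<Rightarrow> bool) \<Rightarrow> ('a \<Rightarrow> 'b) \<Rightarrow> bool" where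
  "graph_hom V E W F f \<longleftrightarrow> f ` V \<subseteq> W \<and> (\<forall>x\<in>V. \<forall>y\<in>V. E x y \<longrightarrow> F (f x) (f y))"

definition graph_aut :: "'a set \<Rightarrow> ('a \<Rightarrow> 'a \<Rightarrow> bool) \<Rightarrow> ('a \<Rightarrow> 'a) \<Rightarrow> bool" where
  "graph_aut V E f \<longleftrightarrow> bij_betw f V V \<and> (\<forall>x\<in>V. \<forall>y\<in>V. E (f x) (f y) \<longleftrightarrow> E x y)"

definition is_core :: "'a set \<Rightarrow> ('a \<Rightarrow> 'a \<Rightarrow> bool) \<Rightarrow> bool" where
  "is_core V E \<longleftrightarrow> (\<forall>f. graph_hom V E V E f \<longrightarrow> graph_aut V E f)"

end

theory Submission
  imports Defs
begin

lemma ndist_sym: "ndist a b = ndist b a"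
  by (simp add: ndist_def)

lemma V_elem:
  assumes "x \<in> stable_kneser_vertices n 2 s"
  shows "\<exists>a b. x = {a,b} \<and> a \<noteq> b \<and> a \<in> {1..n} \<and> b \<in> {1..n} \<and> s \<le> ndist a b \<and> ndist a b \<le> n - s"
proof -
  from assms have c: "card x = 2" and st: "s_stable n s x"
    by (auto simp: stable_kneser_vertices_def)
  from c obtain a b where x: "x = {a,b}" "a \<noteq> b" by (auto simp: card_2_iff)
  with st show ?thesis unfolding s_stable_def by auto
qed

lemma V_pair:
  assumes "a \<noteq> b" "a \<in> {1..n}" "b \<in> {1..n}" "s \<le> ndist a b" "ndist a b \<le> n - s"
  shows "{a,b} \<in> stable_kneser_vertices n 2 s"
  using assms unfolding stable_kneser_vertices_def s_stable_def
  by (auto simp: ndist_sym)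

lemma V_sub: "x \<in> stable_kneser_vertices n 2 s \<Longrightarrow> x \<subseteq> {1..n}"
  by (auto simp: stable_kneser_vertices_def s_stable_def)

lemma V_card: "x \<in> stable_kneser_vertices n 2 s \<Longrightarrow> card x = 2"
  by (auto simp: stable_kneser_vertices_def)

lemma V_finite: "finite (stable_kneser_vertices n 2 s)"
proof -
  have "stable_kneser_vertices n 2 s \<subseteq> Pow {1..n}" using V_sub by blast
  then show ?thesis by (rule finite_subset) simp
qed

lemma no_triangle:
  assumes "s \<ge> 3" "a \<noteq> b" "b \<noteq> c" "a \<noteq> c"
    "s \<le> ndist a b" "ndist a b \<le> s + 2"
    "s \<le> ndist b c" "ndist b c \<le> s + 2"
    "s \<le> ndist a c" "ndist a c \<le> s + 2"
  shows False
  using assms unfolding ndist_def by (auto split: if_splits)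

lemma common_point:
  assumes s3: "s \<ge> 3" and F: "F \<subseteq> stable_kneser_vertices (2*s+2) 2 s" "F \<noteq> {}"
    and inter: "\<forall>x\<in>F. \<forall>y\<in>F. x \<inter> y \<noteq> {}"
  shows "\<exists>p. \<forall>x\<in>F. p \<in> x"
proof (rule ccontr)
  assume nc: "\<not> ?thesis"
  from F obtain x0 where x0: "x0 \<in> F" by auto
  from V_elem[of x0] x0 F obtain a b where ab: "x0 = {a,b}" "a \<noteq> b" "a \<in> {1..2*s+2}" "b \<in> {1..2*s+2}"
    "s \<le> ndist a b" "ndist a b \<le> 2*s+2 - s" by blast
  from nc obtain y where y: "y \<in> F" "a \<notin> y" by auto
  from V_elem[of y] y F obtain c d where cd: "y = {c,d}" "c \<noteq> d"
    "s \<le> ndist c d" "ndist c d \<le> 2*s+2 - s" by blast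
  from inter x0 y ab have "b \<in> y" by auto
  then obtain e where e: "y = {b,e}" "e \<noteq> b" "e \<noteq> a" "s \<le> ndist b e" "ndist b e \<le> s + 2"
    using cd y(2) by (auto simp: ndist_sym)
  from nc obtain z where z: "z \<in> F" "b \<notin> z" by auto
  from V_elem[of z] z F obtain g h where gh: "z = {g,h}" "g \<noteq> h"
    "s \<le> ndist g h" "ndist g h \<le> 2*s+2 - s" by blast
  from inter x0 z ab have "a \<in> z" by auto
  moreover from inter y z e have "e \<in> z" by auto
  ultimately have "z = {a,e}" using gh e by auto
  with gh have "s \<le> ndist a e" "ndist a e \<le> s + 2"
    by (auto simp: ndist_sym doubleton_eq_iff)
  then show False using no_triangle[OF s3 ab(2), of e] e ab by (auto simp: ndist_sym)
qed

definition Tm :: "nat \<Rightarrow> nat \<Rightarrow> nat \<Rightarrow> nat" where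
  "Tm n k p = (if p + k \<le> n then p + k else p + k - n)"

lemma Tm_in: "p \<in> {1..n} \<Longrightarrow> k < n \<Longrightarrow> Tm n k p \<in> {1..n}"
  by (auto simp: Tm_def)

lemma Tm_pair:
  assumes "s \<ge> 3" "p \<in> {1..2*s+2}" "k \<in> {s, s+1, s+2}"
  shows "{p, Tm (2*s+2) k p} \<in> stable_kneser_vertices (2*s+2) 2 s"
  apply (rule V_pair)
  using assms by (auto simp: Tm_def ndist_def)

definition star :: "nat \<Rightarrow> nat \<Rightarrow> nat \<Rightarrow> nat set set" where
  "star n s p = {x \<in> stable_kneser_vertices n 2 s. p \<in> x}"

lemma star_eq:
  assumes s3: "s \<ge> 3" and p: "p \<in> {1..2*s+2}"
  shows "star (2*s+2) s p = (\<lambda>q. {p,q}) ` {Tm (2*s+2) s p, Tm (2*s+2) (s+1) p, Tm (2*s+2) (s+2) p}"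
proof
  show "star (2*s+2) s p \<subseteq> (\<lambda>q. {p,q}) ` {Tm (2*s+2) s p, Tm (2*s+2) (s+1) p, Tm (2*s+2) (s+2) p}"
  proof
    fix x assume "x \<in> star (2*s+2) s p"
    then have xV: "x \<in> stable_kneser_vertices (2*s+2) 2 s" and px: "p \<in> x" by (auto simp: star_def)
    from V_elem[OF xV] obtain a b where ab: "x = {a,b}" "a \<noteq> b" "a \<in> {1..2*s+2}" "b \<in> {1..2*s+2}"
      "s \<le> ndist a b" "ndist a b \<le> 2*s+2 - s" by blast
    then obtain q where q: "x = {p,q}" "q \<in> {1..2*s+2}" "s \<le> ndist p q" "ndist p q \<le> s+2"
      using px by (auto simp: ndist_sym)
    have "q = Tm (2*s+2) s p \<or> q = Tm (2*s+2) (s+1) p \<or> q = Tm (2*s+2) (s+2) p"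
      using q p unfolding Tm_def ndist_def by (auto split: if_splits)
    with q show "x \<in> (\<lambda>q. {p,q}) ` {Tm (2*s+2) s p, Tm (2*s+2) (s+1) p, Tm (2*s+2) (s+2) p}" by auto
  qed
next
  show "(\<lambda>q. {p,q}) ` {Tm (2*s+2) s p, Tm (2*s+2) (s+1) p, Tm (2*s+2) (s+2) p} \<subseteq> star (2*s+2) s p"
    using Tm_pair[OF s3 p] by (auto simp: star_def)
qed

lemma star_card:
  assumes s3: "s \<ge> 3" and p: "p \<in> {1..2*s+2}"
  shows "card (star (2*s+2) s p) = 3"
proof -
  have inj: "inj (\<lambda>q. {p,q::nat})" by (auto simp: inj_def doubleton_eq_iff)
  have d: "Tm (2*s+2) s p \<noteq> Tm (2*s+2) (s+1) p" "Tm (2*s+2) s p \<noteq> Tm (2*s+2) (s+2) p"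
     "Tm (2*s+2) (s+1) p \<noteq> Tm (2*s+2) (s+2) p"
    using p s3 by (auto simp: Tm_def)
  show ?thesis unfolding star_eq[OF s3 p] card_image[OF inj_on_subset[OF inj subset_UNIV]]
    using d by simp
qed

lemma double_count:
  assumes "finite A" "finite B"
  shows "(\<Sum>a\<in>A. card {b\<in>B. R a b}) = (\<Sum>b\<in>B. card {a\<in>A. R a b})"
proof -
  have "(\<Sum>a\<in>A. card {b\<in>B. R a b}) = (\<Sum>a\<in>A. \<Sum>b\<in>B. if R a b then 1 else 0)"
    using assms by (simp add: sum.If_cases Int_def conj_commute)
  also have "\<dots> = (\<Sum>b\<in>B. \<Sum>a\<in>A. if R a b then 1 else 0)" by (rule sum.swap)
  also have "\<dots> = (\<Sum>b\<in>B. card {a\<in>A. R a b})"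
    using assms by (simp add: sum.If_cases Int_def conj_commute)
  finally show ?thesis .
qed

theorem mainTheorem4:
  fixes s :: nat
  assumes "s \<ge> 3"
  shows "is_core (stable_kneser_vertices (2 * s + 2) 2 s) kneser_adj"
  unfolding is_core_def
proof (intro allI impI)
  note s3 = assms
  define n where "n = 2*s+2"
  define P where "P = {1..n}"
  define V where "V = stable_kneser_vertices n 2 s"
  fix f assume hom0: "graph_hom (stable_kneser_vertices (2 * s + 2) 2 s) kneser_adj
                        (stable_kneser_vertices (2 * s + 2) 2 s) kneser_adj f"
  have fV: "\<And>x. x \<in> V \<Longrightarrow> f x \<in> V" and fE: "\<And>x y. x \<in> V \<Longrightarrow> y \<in> V \<Longrightarrow> x \<inter> y = {} \<Longrightarrow> f x \<inter> f y = {}"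
    using hom0 unfolding graph_hom_def kneser_adj_def V_def n_def by auto
  have finP: "finite P" and finV: "finite V" using V_finite unfolding P_def V_def by auto
  have VP: "\<And>x. x \<in> V \<Longrightarrow> x \<subseteq> P" using V_sub unfolding V_def P_def by blast
  have Vc: "\<And>x. x \<in> V \<Longrightarrow> card x = 2" using V_card unfolding V_def by blast
  have Vfin: "\<And>x. x \<in> V \<Longrightarrow> finite x" using Vc by (metis card.infinite zero_neq_numeral)
  define A where "A q = {x\<in>V. q \<in> f x}" for q
  have Aint: "\<forall>x\<in>A q. \<forall>y\<in>A q. x \<inter> y \<noteq> {}" for q
    using fE unfolding A_def by blast
  have Aex: "\<exists>p. p \<in> P \<and> A q \<subseteq> star n s p" if "A q \<noteq> {}" for q
  proof -
    have "A q \<subseteq> stable_kneser_vertices (2*s+2) 2 s" unfolding A_def V_def n_def by auto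
    from common_point[OF s3 this that Aint] obtain p where p: "\<forall>x\<in>A q. p \<in> x" by blast
    from that obtain x where "x \<in> A q" by auto
    then have "p \<in> P" using p VP unfolding A_def by auto
    with p show ?thesis unfolding star_def A_def V_def by auto
  qed
  define \<phi> where "\<phi> q = (SOME p. p \<in> P \<and> A q \<subseteq> star n s p)" for q
  have phi: "\<phi> q \<in> P \<and> A q \<subseteq> star n s (\<phi> q)" if "A q \<noteq> {}" for q
    unfolding \<phi>_def by (rule someI_ex[OF Aex[OF that]])
  have starc: "p \<in> P \<Longrightarrow> card (star n s p) = 3" for p
    using star_card[OF s3] unfolding P_def n_def by blast
  have starfin: "finite (star n s p)" for p
    using finV unfolding star_def V_def by auto
  have Ale: "card (A q) \<le> 3" for q
  proof (cases "A q = {}")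
    case False
    with phi[OF False] starc starfin show ?thesis by (metis card_mono)
  qed simp
  have sumA: "(\<Sum>q\<in>P. card (A q)) = (\<Sum>x\<in>V. 2)"
  proof -
    have "(\<Sum>q\<in>P. card (A q)) = (\<Sum>q\<in>P. card {x\<in>V. q \<in> f x})" unfolding A_def ..
    also have "\<dots> = (\<Sum>x\<in>V. card {q\<in>P. q \<in> f x})" by (rule double_count[OF finP finV])
    also have "\<dots> = (\<Sum>x\<in>V. 2)"
    proof (rule sum.cong)
      fix x assume x: "x \<in> V"
      have "{q\<in>P. q \<in> f x} = f x" using VP[OF fV[OF x]] by auto
      then show "card {q\<in>P. q \<in> f x} = 2" using Vc[OF fV[OF x]] by simp
    qed simp
    finally show ?thesis .
  qed
  have sumS: "(\<Sum>p\<in>P. card (star n s p)) = (\<Sum>x\<in>V. 2)"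
  proof -
    have "(\<Sum>p\<in>P. card (star n s p)) = (\<Sum>p\<in>P. card {x\<in>V. p \<in> x})" unfolding star_def V_def ..
    also have "\<dots> = (\<Sum>x\<in>V. card {p\<in>P. p \<in> x})" by (rule double_count[OF finP finV])
    also have "\<dots> = (\<Sum>x\<in>V. 2)"
    proof (rule sum.cong)
      fix x assume x: "x \<in> V"
      have "{p\<in>P. p \<in> x} = x" using VP[OF x] by auto
      then show "card {p\<in>P. p \<in> x} = 2" using Vc[OF x] by simp
    qed simp
    finally show ?thesis .
  qed
  have A3: "card (A q) = 3" if q: "q \<in> P" for q
  proof (rule ccontr)
    assume "card (A q) \<noteq> 3"
    with Ale have lt: "card (A q) < 3" using le_neq_implies_less by blast
    have "(\<Sum>q\<in>P. card (A q)) < (\<Sum>p\<in>P. card (star n s p))"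
      by (rule sum_strict_mono_ex1[OF finP]) (use Ale starc q lt in auto)
    with sumA sumS show False by simp
  qed
  have Aeq: "A q = star n s (\<phi> q)" and phiP: "\<phi> q \<in> P" if q: "q \<in> P" for q
  proof -
    have ne: "A q \<noteq> {}" using A3[OF q] by auto
    from phi[OF ne] have "\<phi> q \<in> P" "A q \<subseteq> star n s (\<phi> q)" by auto
    then show "A q = star n s (\<phi> q)" "\<phi> q \<in> P"
      using card_subset_eq[OF starfin] A3[OF q] starc by auto
  qed
  have two: "card {q\<in>P. \<phi> q \<in> x} = 2" if x: "x \<in> V" for x
  proof -
    have "{q\<in>P. \<phi> q \<in> x} = {q\<in>P. x \<in> A q}" using Aeq x unfolding star_def V_def by auto
    also have "\<dots> = f x" using VP[OF fV[OF x]] x unfolding A_def by auto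
    finally show ?thesis using Vc[OF fV[OF x]] by simp
  qed
  define mult where "mult p = card {q\<in>P. \<phi> q = p}" for p
  have msum: "mult a + mult b = 2" if "{a,b} \<in> V" "a \<noteq> b" for a b
  proof -
    have "{q\<in>P. \<phi> q \<in> {a,b}} = {q\<in>P. \<phi> q = a} \<union> {q\<in>P. \<phi> q = b}" by auto
    then have "card {q\<in>P. \<phi> q \<in> {a,b}} = mult a + mult b"
      unfolding mult_def using finP that(2) by (simp add: card_Un_disjoint disjoint_iff)
    with two[OF that(1)] show ?thesis by simp
  qed
  have pairV: "{p, Tm n k p} \<in> V" "p \<noteq> Tm n k p" if "p \<in> P" "k \<in> {s, s+1, s+2}" for p k
    using Tm_pair[OF s3, of p k] that s3 unfolding V_def n_def P_def by (auto simp: Tm_def)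
  have mstep: "mult j = mult (Tm n 1 j)" if j: "j \<in> P" for j
  proof -
    define i where "i = Tm n (s+2) j"
    have iP: "i \<in> P" using j s3 unfolding i_def P_def n_def Tm_def by auto
    have e1: "Tm n s i = j" and e2: "Tm n (s+1) i = Tm n 1 j"
      using j s3 unfolding i_def P_def n_def Tm_def by auto
    from msum[OF pairV[OF iP, of s]] msum[OF pairV[OF iP, of "s+1"]] e1 e2
    show ?thesis by auto
  qed
  have mconst: "j \<in> P \<longrightarrow> mult j = mult 1" for j
  proof (induction j)
    case (Suc j)
    show ?case
    proof (cases "j = 0")
      case False
      show ?thesis
      proof
        assume "Suc j \<in> P"
        then have "j \<in> P" "Tm n 1 j = Suc j" using False unfolding P_def Tm_def by auto
        with Suc mstep show "mult (Suc j) = mult 1" by metis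
      qed
    qed simp
  qed (simp add: P_def)
  have 1: "(1::nat) \<in> P" unfolding P_def n_def by simp
  have m1: "mult 1 = 1"
    using msum[OF pairV[OF 1, of s]] mconst[of "Tm n s 1"] Tm_in[of 1 n s] 1 s3
    unfolding P_def n_def by auto
  have injphi: "inj_on \<phi> P"
  proof (rule inj_onI)
    fix q1 q2 assume q: "q1 \<in> P" "q2 \<in> P" "\<phi> q1 = \<phi> q2"
    show "q1 = q2"
    proof (rule ccontr)
      assume ne: "q1 \<noteq> q2"
      have "{q1,q2} \<subseteq> {q\<in>P. \<phi> q = \<phi> q1}" using q by auto
      then have "card {q1,q2} \<le> mult (\<phi> q1)" unfolding mult_def by (rule card_mono[rotated]) (use finP in auto)
      moreover have "mult (\<phi> q1) = 1" using mconst phiP[OF q(1)] m1 by auto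
      ultimately show False using ne by simp
    qed
  qed
  have rep: "\<phi> ` f x = x" if x: "x \<in> V" for x
  proof -
    have sub: "\<phi> ` f x \<subseteq> x"
    proof
      fix p assume "p \<in> \<phi> ` f x"
      then obtain q where q: "q \<in> f x" "p = \<phi> q" by auto
      have qP: "q \<in> P" using q VP[OF fV[OF x]] by auto
      have "x \<in> A q" using x q unfolding A_def by auto
      then show "p \<in> x" using Aeq[OF qP] q unfolding star_def by auto
    qed
    have "card (\<phi> ` f x) = 2"
      using card_image[OF inj_on_subset[OF injphi VP[OF fV[OF x]]]] Vc[OF fV[OF x]] by simp
    then show ?thesis using card_subset_eq[OF Vfin[OF x] sub] Vc[OF x] by simp
  qed
  have injf: "inj_on f V" by (metis inj_onI rep)
  have imgV: "f ` V = V"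
    using card_subset_eq[OF finV] card_image[OF injf] fV by blast
  show "graph_aut (stable_kneser_vertices (2 * s + 2) 2 s) kneser_adj f"
    unfolding graph_aut_def
  proof (intro conjI ballI)
    show "bij_betw f (stable_kneser_vertices (2 * s + 2) 2 s) (stable_kneser_vertices (2 * s + 2) 2 s)"
      using injf imgV unfolding bij_betw_def V_def n_def by simp
  next
    fix x y assume "x \<in> stable_kneser_vertices (2 * s + 2) 2 s" "y \<in> stable_kneser_vertices (2 * s + 2) 2 s"
    then have x: "x \<in> V" and y: "y \<in> V" unfolding V_def n_def by auto
    have "f x \<inter> f y = {} \<longleftrightarrow> x \<inter> y = {}"
    proof
      assume "f x \<inter> f y = {}"
      then have "\<phi> ` f x \<inter> \<phi> ` f y = {}"
        using inj_on_image_Int[OF injphi VP[OF fV[OF x]] VP[OF fV[OF y]]] by simp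
      then show "x \<inter> y = {}" using rep x y by simp
    qed (use fE x y in auto)
    then show "kneser_adj (f x) (f y) = kneser_adj x y" unfolding kneser_adj_def .
  qed
qed

end
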